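(* Let $(X,p)$ be a complete partial metric space, let $x_o\in X$, and let $f:X\to X$ be a Cauchy function at $x_o$. If $f$ is non-expansive and weakly orbitally continuous at $x_o$, then $f$ has a fixed point.
   Context: A partial metric on $X$ is $p:X\times X\to\mathbb{R}$ with, for all $x,y,z$: $p(x,x)\le p(x,y)$; $p(x,y)=p(y,x)$; $p(x,x)=p(x,y)=p(y,y)$ iff $x=y$; $p(x,y)\le p(x,z)+p(z,y)-p(z,z)$. The topology on $X$ is generated by the balls $\{y\mid p(x,y)-p(x,x)<\epsilon\}$, so $a$ is a limit of $\{x_i\}$ iff for every $\epsilon>0$ there is $N$ with $p(a,x_i)-p(a,a)<\epsilon$ for all $i>N$. A sequence $\{x_i\}$ is Cauchy with central distance $r\in\mathbb{R}$ if for every $\epsilon>0$ there is $N$ with $|p(x_i,x_j)-r|<\epsilon$ for all $i\ge j>N$. A special limit of such a sequence is a limit $a$ with $p(a,a)=r$. $(X,p)$ is complete if every Cauchy sequence has a special limit. $f$ is a Cauchy function at $x_o$ if the orbit $\{f^i(x_o)\}_{i\in\mathbb{N}}$ ($f^0(x_o)=x_o$, $f^{i+1}(x_o)=f(f^i(x_o))$) is Cauchy. $f$ is non-expansive if $p(f(x),f(y))\le p(x,y)$ for all $x,y$. $f$ is weakly orbitally continuous at $x_o$ if whenever $a$ is a special limit of $\{f^i(x_o)\}$, $f(a)$ is a limit of $\{f^i(x_o)\}$. *)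

theory Defs
  imports Main "HOL.Real"
begin

definition partial_metric :: "('a \<Rightarrow> 'a \<Rightarrow> real) \<Rightarrow> bool" where
  "partial_metric p \<longleftrightarrow>
     (\<forall>x y. p x x \<le> p x y) \<and>
     (\<forall>x y. p x y = p y x) \<and>
     (\<forall>x y. (p x x = p x y \<and> p x y = p y y) \<longleftrightarrow> x = y) \<and>
     (\<forall>x y z. p x y \<le> p x z + p z y - p z z)"

definition pm_limit :: "('a \<Rightarrow> 'a \<Rightarrow> real) \<Rightarrow> (nat \<Rightarrow> 'a) \<Rightarrow> 'a \<Rightarrow> bool" where
  "pm_limit p xs a \<longleftrightarrow>
     (\<forall>\<epsilon>>0. \<exists>N. \<forall>i>N. p a (xs i) - p a a < \<epsilon>)"

definition pm_cauchy_central :: "('a \<Rightarrow> 'a \<Rightarrow> real) \<Rightarrow> (nat \<Rightarrow> 'a) \<Rightarrow> real \<Rightarrow> bool" where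
  "pm_cauchy_central p xs r \<longleftrightarrow>
     (\<forall>\<epsilon>>0. \<exists>N. \<forall>i j. i \<ge> j \<and> j > N \<longrightarrow> \<bar>p (xs i) (xs j) - r\<bar> < \<epsilon>)"

definition pm_cauchy :: "('a \<Rightarrow> 'a \<Rightarrow> real) \<Rightarrow> (nat \<Rightarrow> 'a) \<Rightarrow> bool" where
  "pm_cauchy p xs \<longleftrightarrow> (\<exists>r. pm_cauchy_central p xs r)"

definition pm_special_limit :: "('a \<Rightarrow> 'a \<Rightarrow> real) \<Rightarrow> (nat \<Rightarrow> 'a) \<Rightarrow> 'a \<Rightarrow> bool" where
  "pm_special_limit p xs a \<longleftrightarrow>
     (\<exists>r. pm_cauchy_central p xs r \<and> pm_limit p xs a \<and> p a a = r)"

definition pm_complete :: "('a \<Rightarrow> 'a \<Rightarrow> real) \<Rightarrow> bool" where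
  "pm_complete p \<longleftrightarrow> (\<forall>xs. pm_cauchy p xs \<longrightarrow> (\<exists>a. pm_special_limit p xs a))"

definition cauchy_function_at :: "('a \<Rightarrow> 'a \<Rightarrow> real) \<Rightarrow> ('a \<Rightarrow> 'a) \<Rightarrow> 'a \<Rightarrow> bool" where
  "cauchy_function_at p f x0 \<longleftrightarrow> pm_cauchy p (\<lambda>i. (f ^^ i) x0)"

definition non_expansive :: "('a \<Rightarrow> 'a \<Rightarrow> real) \<Rightarrow> ('a \<Rightarrow> 'a) \<Rightarrow> bool" where
  "non_expansive p f \<longleftrightarrow> (\<forall>x y. p (f x) (f y) \<le> p x y)"

definition weakly_orbitally_continuous_at :: "('a \<Rightarrow> 'a \<Rightarrow> real) \<Rightarrow> ('a \<Rightarrow> 'a) \<Rightarrow> 'a \<Rightarrow> bool" where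
  "weakly_orbitally_continuous_at p f x0 \<longleftrightarrow>
     (\<forall>a. pm_special_limit p (\<lambda>i. (f ^^ i) x0) a \<longrightarrow> pm_limit p (\<lambda>i. (f ^^ i) x0) (f a))"

end

theory Submission
  imports Defs
begin

lemma eps_le: fixes x y :: real assumes "\<And>e. e > 0 \<Longrightarrow> x < y + e" shows "x \<le> y"
proof (rule ccontr)
  assume "\<not> x \<le> y"
  then have "x - y > 0" by simp
  from assms[OF this] show False by simp
qed

theorem theorem7p7:
  fixes p :: "'a \<Rightarrow> 'a \<Rightarrow> real" and f :: "'a \<Rightarrow> 'a" and x0 :: 'a
  assumes "partial_metric p"
    and "pm_complete p"
    and "cauchy_function_at p f x0"
    and "non_expansive p f"
    and "weakly_orbitally_continuous_at p f x0"
  shows "\<exists>x. f x = x"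
proof -
  define xs where "xs = (\<lambda>i. (f ^^ i) x0)"
  have pm: "\<And>x y. p x x \<le> p x y" "\<And>x y. p x y = p y x"
    "\<And>x y. (p x x = p x y \<and> p x y = p y y) \<longleftrightarrow> x = y"
    "\<And>x y z. p x y \<le> p x z + p z y - p z z"
    using assms(1) unfolding partial_metric_def by blast+
  have "pm_cauchy p xs" using assms(3) unfolding cauchy_function_at_def xs_def .
  then obtain a where "pm_special_limit p xs a" using assms(2) unfolding pm_complete_def by blast
  then obtain r where C: "pm_cauchy_central p xs r" and L: "pm_limit p xs a" and ar: "p a a = r"
    unfolding pm_special_limit_def by blast
  have L2: "pm_limit p xs (f a)"
    using assms(5) \<open>pm_special_limit p xs a\<close> unfolding weakly_orbitally_continuous_at_def xs_def by blast
  let ?b = "f a"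
  have key: "\<exists>i. p a (xs i) < r + e \<and> p ?b (xs i) < p ?b ?b + e \<and> p (xs i) (xs i) > r - e"
    if e: "e > 0" for e
  proof -
    obtain N1 where N1: "\<forall>i>N1. p a (xs i) - p a a < e" using L e unfolding pm_limit_def by blast
    obtain N2 where N2: "\<forall>i>N2. p ?b (xs i) - p ?b ?b < e" using L2 e unfolding pm_limit_def by blast
    obtain N3 where N3: "\<forall>i j. i \<ge> j \<and> j > N3 \<longrightarrow> \<bar>p (xs i) (xs j) - r\<bar> < e"
      using C e unfolding pm_cauchy_central_def by blast
    define i where "i = Suc (N1 + N2 + N3)"
    have "p a (xs i) - p a a < e" "p ?b (xs i) - p ?b ?b < e" "\<bar>p (xs i) (xs i) - r\<bar> < e"
      using N1 N2 N3 unfolding i_def by auto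
    then show ?thesis using ar by (intro exI[of _ i]) auto
  qed
  have c1: "p a ?b \<le> p ?b ?b"
  proof (rule eps_le)
    fix e :: real assume "e > 0"
    then obtain i where i: "p a (xs i) < r + e/3" "p ?b (xs i) < p ?b ?b + e/3" "p (xs i) (xs i) > r - e/3"
      using key[of "e/3"] by auto
    have "p a ?b \<le> p a (xs i) + p (xs i) ?b - p (xs i) (xs i)" by (rule pm(4))
    then show "p a ?b < p ?b ?b + e" using i pm(2)[of "xs i" ?b] by linarith
  qed
  have c2: "r \<le> p ?b ?b"
  proof (rule eps_le)
    fix e :: real assume "e > 0"
    then obtain i where i: "p a (xs i) < r + e/3" "p ?b (xs i) < p ?b ?b + e/3" "p (xs i) (xs i) > r - e/3"
      using key[of "e/3"] by auto
    have "p (xs i) (xs i) \<le> p (xs i) ?b + p ?b (xs i) - p ?b ?b" by (rule pm(4))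
    then show "r < p ?b ?b + e" using i pm(2)[of "xs i" ?b] by linarith
  qed
  have c3: "p ?b ?b \<le> p a a" using assms(4) unfolding non_expansive_def by blast
  have "p a a = p a ?b \<and> p a ?b = p ?b ?b" using c1 c2 c3 ar pm(1)[of a ?b] by linarith
  then have "a = ?b" using pm(3) by blast
  then show ?thesis by metis
qed

end
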